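(* Let $V$ and $H$ be real Hilbert spaces with scalar products $(\cdot,\cdot)_V$, $(\cdot,\cdot)_H$ and norms $\|\cdot\|_V$, $\|\cdot\|_H$, and let $\gamma:V\to H$ be a continuous, linear and compact operator. Let $\lambda_1\le\lambda_2\le\dots$ be the eigenvalues of the problem: find $\lambda\in\mathbb{R}$, $u\in V$, $u\ne0$, with $(u,v)_V=\lambda(\gamma u,\gamma v)_H$ for all $v\in V$, and let $C_\gamma$ be the smallest constant such that $\|\gamma v\|_H\le C_\gamma\|v\|_V$ for all $v\in V$. Let $u_*\in V$ and $\lambda_*\in\mathbb{R}$ be arbitrary and let $w\in V$ satisfy $(w,v)_V=(u_*,v)_V-\lambda_*(\gamma u_*,\gamma v)_H$ for all $v\in V$. Assume that $$\left|\frac{\lambda_1-\lambda_*}{\lambda_1}\right|\le\left|\frac{\lambda_i-\lambda_*}{\lambda_i}\right|\quad\forall i=1,2,\dots.$$ Further let $A\ge0$ and $B\ge0$ satisfy $B<\lambda_*\|\gamma u_*\|_H$ and $\|w\|_V\le A+C_\gamma B$. Then $$X_2^2\le\lambda_1\quad\text{and}\quad C_\gamma\le 1/X_2,$$ where $$X_2=\tfrac12\left(-\alpha+\sqrt{\alpha^2+4(\lambda_*-\beta)}\right),\qquad \alpha=\frac{A}{\|\gamma u_*\|_H},\qquad \beta=\frac{B}{\|\gamma u_*\|_H}.$$ *)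

theory Defs
  imports "HOL-Analysis.Analysis"
begin

definition compact_operator :: "('a::real_normed_vector \<Rightarrow> 'b::real_normed_vector) \<Rightarrow> bool" where
  "compact_operator T \<longleftrightarrow> (\<forall>S. bounded S \<longrightarrow> compact (closure (T ` S)))"

definition is_eigenvalue ::
  "('v::real_inner \<Rightarrow> 'h::real_inner) \<Rightarrow> real \<Rightarrow> bool" where
  "is_eigenvalue g lam \<longleftrightarrow>
     (\<exists>u. u \<noteq> 0 \<and> (\<forall>v. inner u v = lam * inner (g u) (g v)))"

end

theory Submission
  imports Defs
begin


lemma norm_add_scale_sq:
  fixes z v :: "'a::real_inner"
  shows "(norm (z + t *\<^sub>R v))\<^sup>2 = (norm z)\<^sup>2 + 2 * t * inner z v + t\<^sup>2 * (norm v)\<^sup>2"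
  unfolding power2_norm_eq_inner by (simp add: inner_add inner_commute power2_eq_square algebra_simps)

lemma riesz:
  fixes f :: "'v::{real_inner,complete_space} \<Rightarrow> real"
  assumes bl: "bounded_linear f"
  shows "\<exists>z. \<forall>v. f v = inner z v"
proof -
  interpret f: bounded_linear f by fact
  obtain c where c: "c > 0" "\<And>x. norm (f x) \<le> norm x * c" using f.pos_bounded by blast
  define F where "F y = (norm y)\<^sup>2 / 2 - f y" for y
  have Flow: "F y \<ge> - c\<^sup>2 / 2" for y
  proof -
    have "f y \<le> norm y * c" using c(2)[of y] by simp
    moreover have "(norm y - c)\<^sup>2 \<ge> 0" by simp
    ultimately show ?thesis unfolding F_def by (simp add: power2_eq_square algebra_simps)
  qed
  define m where "m = (INF y. F y)"
  have bdd: "bdd_below (range F)" using Flow by (meson bdd_belowI2)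
  have mle: "m \<le> F y" for y unfolding m_def by (rule cINF_lower[OF bdd]) simp
  have "\<forall>n::nat. \<exists>y. F y < m + 1 / (real n + 1)"
  proof
    fix n :: nat
    have "m < m + 1 / (real n + 1)" by simp
    then show "\<exists>y. F y < m + 1 / (real n + 1)" unfolding m_def
      by (subst (asm) cINF_less_iff[OF _ bdd]) auto
  qed
  then obtain ys where ys: "\<And>n. F (ys n) < m + 1 / (real n + 1)" by metis
  have mid: "(norm (a - b))\<^sup>2 = 4 * (F a + F b - 2 * F ((a + b) /\<^sub>R 2))" for a b
  proof -
    have "f ((a + b) /\<^sub>R 2) = (f a + f b) / 2" by (simp add: f.scale f.add)
    moreover have "(norm ((a + b) /\<^sub>R 2))\<^sup>2 = (norm (a+b))\<^sup>2 / 4"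
      by (simp add: power2_eq_square)
    moreover have "(norm (a - b))\<^sup>2 + (norm (a+b))\<^sup>2 = 2 * (norm a)\<^sup>2 + 2 * (norm b)\<^sup>2"
      by (simp add: power2_norm_eq_inner inner_diff inner_add inner_commute)
    ultimately show ?thesis unfolding F_def by (simp add: algebra_simps)
  qed
  have cau: "Cauchy ys"
  proof (rule metric_CauchyI)
    fix e :: real assume e: "e > 0"
    obtain N :: nat where N: "8 / e\<^sup>2 < real N" using reals_Archimedean2 by blast
    show "\<exists>M. \<forall>m\<ge>M. \<forall>n\<ge>M. dist (ys m) (ys n) < e"
    proof (intro exI allI impI)
      fix i j assume i: "i \<ge> N" and j: "j \<ge> N"
      have "1 / (real i + 1) \<le> 1 / (real N + 1)" "1 / (real j + 1) \<le> 1 / (real N + 1)"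
        using i j by (auto simp: divide_simps)
      moreover have "m \<le> F ((ys i + ys j) /\<^sub>R 2)" by (rule mle)
      moreover have "8 / (real N + 1) = 8 * (1 / (real N + 1))" by simp
      ultimately have "(norm (ys i - ys j))\<^sup>2 < 8 / (real N + 1)"
        using mid[of "ys i" "ys j"] ys[of i] ys[of j] by (smt (verit))
      also have "\<dots> < e\<^sup>2"
      proof -
        have e2: "e\<^sup>2 > 0" using e by simp
        have "8 < real N * e\<^sup>2" using N e2 by (simp add: field_simps)
        then have "8 < (real N + 1) * e\<^sup>2" using e2 unfolding distrib_right by linarith
        then show ?thesis by (simp add: field_simps)
      qed
      finally have "(norm (ys i - ys j))\<^sup>2 < e\<^sup>2" .
      then have "norm (ys i - ys j) < e" using e by (simp add: power_less_imp_less_base)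
      then show "dist (ys i) (ys j) < e" by (simp add: dist_norm)
    qed
  qed
  then obtain z where z: "ys \<longlonglongrightarrow> z" using Cauchy_convergent_iff convergent_def by blast
  have Fz: "(\<lambda>n. F (ys n)) \<longlonglongrightarrow> F z"
    unfolding F_def by (intro tendsto_intros z f.tendsto) simp
  have Fm: "(\<lambda>n. F (ys n)) \<longlonglongrightarrow> m"
  proof (rule tendsto_sandwich[of "\<lambda>n. m" _ _ "\<lambda>n. m + 1 / (real n + 1)"])
    show "\<forall>\<^sub>F n in sequentially. m \<le> F (ys n)" using mle by simp
    show "\<forall>\<^sub>F n in sequentially. F (ys n) \<le> m + 1 / (real n + 1)" by (simp add: ys less_imp_le)
    show "(\<lambda>n. m) \<longlonglongrightarrow> m" by simp
    have "(\<lambda>n. 1 / (real n + 1)) \<longlonglongrightarrow> 0" using LIMSEQ_inverse_real_of_nat by (simp add: inverse_eq_divide add.commute)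
    then show "(\<lambda>n. m + 1 / (real n + 1)) \<longlonglongrightarrow> m" using tendsto_add[of "\<lambda>n. m" m sequentially] by force
  qed
  have Fzm: "F z = m" using LIMSEQ_unique[OF Fz Fm] .
  show ?thesis
  proof (intro exI allI)
    fix v
    define d where "d = inner z v - f v"
    define n where "n = (norm v)\<^sup>2 + 1"
    have n: "n > 0" unfolding n_def by (simp add: add_nonneg_pos)
    have key: "F (z + t *\<^sub>R v) - F z = t * d + t\<^sup>2 * (norm v)\<^sup>2 / 2" for t
      unfolding F_def d_def norm_add_scale_sq
      by (simp add:  inner_add inner_commute f.add f.scale algebra_simps power2_eq_square)
    have "F z \<le> F (z + (- d / n) *\<^sub>R v)" using Fzm mle by simp
    then have "0 \<le> (- d / n) * d + (- d / n)\<^sup>2 * (norm v)\<^sup>2 / 2" using key[of "- d / n"] by simp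
    then have "0 \<le> d\<^sup>2 * ((norm v)\<^sup>2 / (2 * n) - 1) / n"
      using n by (simp add: power2_eq_square field_simps)
    moreover have "(norm v)\<^sup>2 / (2 * n) - 1 < 0" using n unfolding n_def by (simp add: field_simps)
    ultimately have h1: "0 \<le> d\<^sup>2 * ((norm v)\<^sup>2 / (2 * n) - 1)" and h2: "(norm v)\<^sup>2 / (2 * n) - 1 < 0"
      using n by (simp_all add: zero_le_divide_iff)
    have "d\<^sup>2 * ((norm v)\<^sup>2 / (2 * n) - 1) \<le> 0"
      using h2 by (intro mult_nonneg_nonpos) auto
    then have "d\<^sup>2 * ((norm v)\<^sup>2 / (2 * n) - 1) = 0" using h1 by linarith
    then have "d\<^sup>2 = 0" using h2 by (metis less_irrefl mult_eq_0_iff)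
    then have "d = 0" by simp
    then show "f v = inner z v" unfolding d_def by simp
  qed
qed



lemma quad_expand:
  fixes M :: "'v::real_inner \<Rightarrow> 'v"
  assumes bl: "bounded_linear M" and sym: "\<And>x y. inner (M x) y = inner x (M y)"
  shows "inner (M (x + t *\<^sub>R y)) (x + t *\<^sub>R y) = inner (M x) x + 2 * t * inner (M x) y + t\<^sup>2 * inner (M y) y"
proof -
  interpret M: bounded_linear M by fact
  have "inner (M y) x = inner (M x) y" using sym[of y x] by (simp add: inner_commute)
  then show ?thesis by (simp add: M.add M.scale inner_add inner_commute algebra_simps power2_eq_square)
qed

lemma top_eig:
  fixes M :: "'v::{real_inner,complete_space} \<Rightarrow> 'v"
  assumes bl: "bounded_linear M"
    and sym: "\<And>x y. inner (M x) y = inner x (M y)"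
    and cpt: "\<And>xs::nat\<Rightarrow>'v. bounded (range xs) \<Longrightarrow> \<exists>r. strict_mono r \<and> convergent (\<lambda>n. M (xs (r n)))"
    and x0: "inner (M x0) x0 > p * (norm x0)\<^sup>2" and p: "p \<ge> 0"
  shows "\<exists>\<sigma> x. \<sigma> > p \<and> x \<noteq> 0 \<and> M x = \<sigma> *\<^sub>R x"
proof -
  interpret M: bounded_linear M by fact
  obtain c where c: "c > 0" "\<And>x. norm (M x) \<le> norm x * c" using M.pos_bounded by blast
  define Q where "Q x = inner (M x) x" for x
  have Qscale: "Q (a *\<^sub>R x) = a\<^sup>2 * Q x" for a x unfolding Q_def by (simp add: M.scale power2_eq_square)
  have Qle: "Q x \<le> c * (norm x)\<^sup>2" for x
  proof -
    have "Q x \<le> norm (M x) * norm x" unfolding Q_def by (rule norm_cauchy_schwarz)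
    also have "\<dots> \<le> norm x * c * norm x" by (rule mult_right_mono[OF c(2)]) simp
    finally show ?thesis by (simp add: power2_eq_square algebra_simps)
  qed
  have x0nz: "x0 \<noteq> 0" using x0 by auto
  define S where "S = sphere (0::'v) 1"
  have bdd: "bdd_above (Q ` S)" unfolding S_def by (intro bdd_aboveI2[where M=c]) (metis Qle mem_sphere_0 mult.right_neutral power_one)
  define \<sigma> where "\<sigma> = (SUP x\<in>S. Q x)"
  define u0 where "u0 = (1 / norm x0) *\<^sub>R x0"
  have u0S: "u0 \<in> S" unfolding S_def u0_def using x0nz by simp
  have "Q u0 = Q x0 / (norm x0)\<^sup>2" unfolding u0_def Qscale by (simp add: power_divide)
  moreover have n2: "(norm x0)\<^sup>2 > 0" using x0nz by simp
  ultimately have "Q u0 * (norm x0)\<^sup>2 = Q x0" by simp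
  then have "p * (norm x0)\<^sup>2 < Q u0 * (norm x0)\<^sup>2" using x0 unfolding Q_def by simp
  then have "Q u0 > p" using n2 by (simp add: mult_less_cancel_right)
  moreover have "Q u0 \<le> \<sigma>" unfolding \<sigma>_def by (rule cSUP_upper[OF u0S bdd])
  ultimately have sp: "\<sigma> > p" by linarith
  then have s0: "\<sigma> > 0" using p by linarith
  have upper: "Q x \<le> \<sigma> * (norm x)\<^sup>2" for x
  proof (cases "x = 0")
    case True then show ?thesis unfolding Q_def by simp
  next
    case False
    define u where "u = (1 / norm x) *\<^sub>R x"
    have uS: "u \<in> S" unfolding S_def u_def using False by simp
    have "Q u = Q x / (norm x)\<^sup>2" unfolding u_def Qscale by (simp add: power_divide)
    moreover have "Q u \<le> \<sigma>" unfolding \<sigma>_def by (rule cSUP_upper[OF uS bdd])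
    ultimately have "Q u * (norm x)\<^sup>2 = Q x" "Q u \<le> \<sigma>" using False by simp_all
    then show ?thesis by (metis mult_right_mono zero_le_power2)
  qed
  have "\<forall>n::nat. \<exists>x\<in>S. \<sigma> - 1 / (real n + 1) < Q x"
  proof
    fix n :: nat
    have "\<sigma> - 1 / (real n + 1) < \<sigma>" by simp
    then show "\<exists>x\<in>S. \<sigma> - 1 / (real n + 1) < Q x" unfolding \<sigma>_def
      using less_cSUP_iff[OF _ bdd] u0S by blast
  qed
  then obtain xs where xsS: "\<And>n. xs n \<in> S" and xsQ: "\<And>n. \<sigma> - 1 / (real n + 1) < Q (xs n)" by metis
  have xsn: "norm (xs n) = 1" for n using xsS[of n] unfolding S_def by simp
  define ys where "ys n = \<sigma> *\<^sub>R xs n - M (xs n)" for n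
  define D where "D = \<sigma> + c"
  have D: "D > 0" unfolding D_def using s0 c by simp
  have ysb: "(norm (ys n))\<^sup>2 \<le> D * (\<sigma> - Q (xs n))" for n
  proof -
    define x where "x = xs n"
    define y where "y = ys n"
    define B where "B a = \<sigma> * (norm a)\<^sup>2 - Q a" for a
    have Bnn: "B a \<ge> 0" for a unfolding B_def using upper[of a] by simp
    have Bexp: "B (x + t *\<^sub>R y) = B x + 2 * t * (norm y)\<^sup>2 + t\<^sup>2 * B y" for t
    proof -
      have "\<sigma> * inner x y - inner (M x) y = inner y y"
        unfolding y_def x_def ys_def by (simp add: inner_diff_left)
      then have "2 * t * (\<sigma> * inner x y) = 2 * t * (inner y y + inner (M x) y)" by simp
      then show ?thesis unfolding B_def Q_def quad_expand[OF bl sym] norm_add_scale_sq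
        by (simp add: power2_norm_eq_inner algebra_simps)
    qed
    have By: "B y \<le> D * (norm y)\<^sup>2"
    proof -
      have "- Q y \<le> norm (M y) * norm y" unfolding Q_def
        using norm_cauchy_schwarz[of "- M y" y] by simp
      also have "\<dots> \<le> norm y * c * norm y" by (rule mult_right_mono[OF c(2)]) simp
      finally show ?thesis unfolding B_def D_def by (simp add: power2_eq_square algebra_simps)
    qed
    have "0 \<le> B (x + (- 1 / D) *\<^sub>R y)" by (rule Bnn)
    also have "\<dots> = B x - 2 * (norm y)\<^sup>2 / D + B y / D\<^sup>2" unfolding Bexp by (simp add: power2_eq_square)
    also have "\<dots> \<le> B x - 2 * (norm y)\<^sup>2 / D + (norm y)\<^sup>2 / D"
    proof -
      have "B y / D\<^sup>2 \<le> (D * (norm y)\<^sup>2) / D\<^sup>2" by (rule divide_right_mono[OF By]) simp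
      also have "\<dots> = (norm y)\<^sup>2 / D" using D by (simp add: power2_eq_square)
      finally show ?thesis by linarith
    qed
    finally have "(norm y)\<^sup>2 / D \<le> B x" by simp
    then have "(norm y)\<^sup>2 \<le> D * B x" using D by (simp add: divide_simps mult.commute)
    then show ?thesis unfolding B_def x_def y_def using xsn[of n] by simp
  qed
  have ys0: "ys \<longlonglongrightarrow> 0"
  proof -
    have "(\<lambda>n. (norm (ys n))\<^sup>2) \<longlonglongrightarrow> 0"
    proof (rule tendsto_sandwich[of "\<lambda>n. 0" _ _ "\<lambda>n. D * (1 / (real n + 1))"])
      show "\<forall>\<^sub>F n in sequentially. 0 \<le> (norm (ys n))\<^sup>2" by simp
      show "\<forall>\<^sub>F n in sequentially. (norm (ys n))\<^sup>2 \<le> D * (1 / (real n + 1))"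
      proof (intro always_eventually allI)
        fix n
        have "\<sigma> - Q (xs n) \<le> 1 / (real n + 1)" using xsQ[of n] by simp
        then show "(norm (ys n))\<^sup>2 \<le> D * (1 / (real n + 1))"
          using ysb[of n] D by (meson mult_left_mono less_imp_le order_trans)
      qed
      show "(\<lambda>n. 0) \<longlonglongrightarrow> (0::real)" by simp
      have "(\<lambda>n. 1 / (real n + 1)) \<longlonglongrightarrow> 0"
        using LIMSEQ_inverse_real_of_nat by (simp add: inverse_eq_divide add.commute)
      then show "(\<lambda>n. D * (1 / (real n + 1))) \<longlonglongrightarrow> 0"
        using tendsto_mult[of "\<lambda>n. D" D sequentially] by force
    qed
    then have "(\<lambda>n. sqrt ((norm (ys n))\<^sup>2)) \<longlonglongrightarrow> sqrt 0" by (rule tendsto_real_sqrt)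
    then have "(\<lambda>n. norm (ys n)) \<longlonglongrightarrow> 0" by simp
    then show ?thesis by (simp add: tendsto_norm_zero_iff)
  qed
  have "bounded (range xs)" using xsn by (auto simp: bounded_iff intro!: exI[of _ 1])
  then obtain r where r: "strict_mono r" and cv: "convergent (\<lambda>n. M (xs (r n)))" using cpt by blast
  then obtain z where z: "(\<lambda>n. M (xs (r n))) \<longlonglongrightarrow> z" unfolding convergent_def by blast
  have ysr: "(\<lambda>n. ys (r n)) \<longlonglongrightarrow> 0" using LIMSEQ_subseq_LIMSEQ[OF ys0 r] by (simp add: comp_def)
  have "(\<lambda>n. ys (r n) + M (xs (r n))) \<longlonglongrightarrow> 0 + z" by (intro tendsto_add ysr z)
  then have "(\<lambda>n. \<sigma> *\<^sub>R xs (r n)) \<longlonglongrightarrow> z" unfolding ys_def by simp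
  then have "(\<lambda>n. (1 / \<sigma>) *\<^sub>R (\<sigma> *\<^sub>R xs (r n))) \<longlonglongrightarrow> (1 / \<sigma>) *\<^sub>R z"
    by (intro tendsto_scaleR tendsto_const)
  then have xl: "(\<lambda>n. xs (r n)) \<longlonglongrightarrow> (1 / \<sigma>) *\<^sub>R z" using s0 by simp
  define x where "x = (1 / \<sigma>) *\<^sub>R z"
  have "(\<lambda>n. norm (xs (r n))) \<longlonglongrightarrow> norm x" unfolding x_def by (intro tendsto_norm xl)
  then have "norm x = 1" using xsn by (simp add: LIMSEQ_const_iff)
  then have xnz: "x \<noteq> 0" by auto
  have "(\<lambda>n. M (xs (r n))) \<longlonglongrightarrow> M x" unfolding x_def by (intro M.tendsto xl)
  then have "M x = z" using LIMSEQ_unique z by blast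
  also have "z = \<sigma> *\<^sub>R x" unfolding x_def using s0 by simp
  finally show ?thesis using sp xnz by blast
qed



definition Kop :: "('v::{real_inner,complete_space} \<Rightarrow> 'h::real_inner) \<Rightarrow> 'v \<Rightarrow> 'v" where
  "Kop g x = (SOME z. \<forall>v. inner z v = inner (g x) (g v))"

lemma inner_unique:
  fixes a b :: "'a::real_inner"
  assumes "\<And>v. inner a v = inner b v" shows "a = b"
proof -
  have "inner (a - b) (a - b) = 0" using assms[of "a - b"] by (simp add: inner_diff_left)
  then show ?thesis by simp
qed

lemma K_inner:
  fixes g :: "'v::{real_inner,complete_space} \<Rightarrow> 'h::real_inner"
  assumes lin: "bounded_linear g"
  shows "inner (Kop g x) v = inner (g x) (g v)"
proof -
  have "bounded_linear (\<lambda>v. inner (g x) (g v))"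
    using bounded_linear_compose[OF bounded_linear_inner_right lin] by (simp add: comp_def)
  then obtain z where "\<forall>v. inner (g x) (g v) = inner z v" using riesz by blast
  then have "\<exists>z. \<forall>v. inner z v = inner (g x) (g v)" by metis
  then show ?thesis unfolding Kop_def by (rule someI_ex[where P="\<lambda>z. \<forall>v. inner z v = inner (g x) (g v)", THEN spec])
qed

lemma K_sym:
  fixes g :: "'v::{real_inner,complete_space} \<Rightarrow> 'h::real_inner"
  assumes lin: "bounded_linear g"
  shows "inner (Kop g x) y = inner x (Kop g y)"
  using K_inner[OF lin, of x y] K_inner[OF lin, of y x] by (simp add: inner_commute)

lemma K_add:
  fixes g :: "'v::{real_inner,complete_space} \<Rightarrow> 'h::real_inner"
  assumes lin: "bounded_linear g"
  shows "Kop g (x + y) = Kop g x + Kop g y"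
  by (rule inner_unique) (simp add: K_inner[OF lin] inner_add_left linear_add[OF bounded_linear.linear[OF lin]])

lemma K_scale:
  fixes g :: "'v::{real_inner,complete_space} \<Rightarrow> 'h::real_inner"
  assumes lin: "bounded_linear g"
  shows "Kop g (r *\<^sub>R x) = r *\<^sub>R Kop g x"
  by (rule inner_unique) (simp add: K_inner[OF lin] linear_scale[OF bounded_linear.linear[OF lin]])

lemma K_diff:
  fixes g :: "'v::{real_inner,complete_space} \<Rightarrow> 'h::real_inner"
  assumes lin: "bounded_linear g"
  shows "Kop g (x - y) = Kop g x - Kop g y"
  by (rule inner_unique) (simp add: K_inner[OF lin] inner_diff_left linear_diff[OF bounded_linear.linear[OF lin]])

lemma K_gbound:
  fixes g :: "'v::{real_inner,complete_space} \<Rightarrow> 'h::real_inner"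
  assumes lin: "bounded_linear g" and c: "\<And>x. norm (g x) \<le> norm x * c" and c0: "c > 0"
  shows "norm (Kop g a) \<le> c * norm (g a)"
proof (cases "Kop g a = 0")
  case True
  then show ?thesis using c0 by simp
next
  case False
  have "(norm (Kop g a))\<^sup>2 = inner (g a) (g (Kop g a))"
    by (simp add: power2_norm_eq_inner K_inner[OF lin])
  also have "\<dots> \<le> norm (g a) * norm (g (Kop g a))" by (rule norm_cauchy_schwarz)
  also have "\<dots> \<le> norm (g a) * (norm (Kop g a) * c)" by (rule mult_left_mono[OF c]) simp
  finally have "norm (Kop g a) * norm (Kop g a) \<le> (c * norm (g a)) * norm (Kop g a)"
    by (simp add: power2_eq_square algebra_simps)
  then show ?thesis using False by simp
qed

lemma K_bl:
  fixes g :: "'v::{real_inner,complete_space} \<Rightarrow> 'h::real_inner"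
  assumes lin: "bounded_linear g"
  shows "bounded_linear (Kop g)"
proof -
  obtain c where c: "c > 0" "\<And>x. norm (g x) \<le> norm x * c" using bounded_linear.pos_bounded[OF lin] by blast
  show ?thesis
  proof (rule bounded_linear_intro[where K="c * c"])
    show "Kop g (x + y) = Kop g x + Kop g y" for x y by (rule K_add[OF lin])
    show "Kop g (r *\<^sub>R x) = r *\<^sub>R Kop g x" for r x by (rule K_scale[OF lin])
    show "norm (Kop g x) \<le> norm x * (c * c)" for x
    proof -
      have "norm (Kop g x) \<le> c * norm (g x)" by (rule K_gbound[OF lin c(2) c(1)])
      also have "\<dots> \<le> c * (norm x * c)" by (rule mult_left_mono[OF c(2)]) (use c in simp)
      finally show ?thesis by (simp add: algebra_simps)
    qed
  qed
qed

lemma K_cpt: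
  fixes g :: "'v::{real_inner,complete_space} \<Rightarrow> 'h::{real_inner,complete_space}"
    and xs :: "nat \<Rightarrow> 'v"
  assumes lin: "bounded_linear g" and cpt: "compact_operator g" and bd: "bounded (range xs)"
  shows "\<exists>r. strict_mono r \<and> convergent (\<lambda>n. Kop g (xs (r n)))"
proof -
  obtain c where c: "c > 0" "\<And>x. norm (g x) \<le> norm x * c" using bounded_linear.pos_bounded[OF lin] by blast
  have "compact (closure (g ` range xs))" using cpt bd unfolding compact_operator_def by blast
  then have sc: "seq_compact (closure (g ` range xs))" by (rule compact_imp_seq_compact)
  have inS: "\<forall>n. g (xs n) \<in> closure (g ` range xs)" by (auto intro: closure_subset[THEN subsetD])
  obtain l r where "l \<in> closure (g ` range xs)" and r: "strict_mono r" and l: "((\<lambda>n. g (xs n)) \<circ> r) \<longlonglongrightarrow> l"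
    using seq_compactE[OF sc, of "\<lambda>n. g (xs n)"] inS by blast
  have cg: "Cauchy (\<lambda>n. g (xs (r n)))" using LIMSEQ_imp_Cauchy[OF l] by (simp add: comp_def)
  have "Cauchy (\<lambda>n. Kop g (xs (r n)))"
  proof (rule metric_CauchyI)
    fix e :: real assume e: "e > 0"
    then obtain M where M: "\<And>m n. m \<ge> M \<Longrightarrow> n \<ge> M \<Longrightarrow> dist (g (xs (r m))) (g (xs (r n))) < e / c"
      using metric_CauchyD[OF cg, of "e / c"] c by auto
    show "\<exists>M. \<forall>m\<ge>M. \<forall>n\<ge>M. dist (Kop g (xs (r m))) (Kop g (xs (r n))) < e"
    proof (intro exI allI impI)
      fix m n assume "m \<ge> M" "n \<ge> M"
      then have d: "norm (g (xs (r m) - xs (r n))) < e / c"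
        using M by (simp add: dist_norm linear_diff[OF bounded_linear.linear[OF lin]])
      have "dist (Kop g (xs (r m))) (Kop g (xs (r n))) = norm (Kop g (xs (r m) - xs (r n)))"
        by (simp add: dist_norm K_diff[OF lin])
      also have "\<dots> \<le> c * norm (g (xs (r m) - xs (r n)))" by (rule K_gbound[OF lin c(2) c(1)])
      also have "\<dots> < c * (e / c)" using d c(1) by (rule mult_strict_left_mono)
      also have "\<dots> = e" using c by simp
      finally show "dist (Kop g (xs (r m))) (Kop g (xs (r n))) < e" .
    qed
  qed
  then show ?thesis using r Cauchy_convergent by blast
qed

lemma eig_pos:
  assumes "is_eigenvalue g lam" shows "lam > 0"
proof -
  from assms obtain u where u: "u \<noteq> 0" and e: "inner u u = lam * inner (g u) (g u)"
    unfolding is_eigenvalue_def by blast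
  have "inner u u > 0" using u by simp
  moreover have "inner (g u) (g u) \<ge> 0" by simp
  ultimately show ?thesis using e by (simp add: zero_less_mult_iff)
qed

lemma K_eig:
  fixes g :: "'v::{real_inner,complete_space} \<Rightarrow> 'h::real_inner"
  assumes lin: "bounded_linear g" and x: "x \<noteq> 0" and eq: "Kop g x = \<mu> *\<^sub>R x" and mu: "\<mu> > 0"
  shows "is_eigenvalue g (1 / \<mu>)"
  unfolding is_eigenvalue_def
proof (intro exI conjI allI)
  show "x \<noteq> 0" by fact
  fix v
  have "\<mu> * inner x v = inner (g x) (g v)" using K_inner[OF lin, of x v] eq by simp
  then show "inner x v = 1 / \<mu> * inner (g x) (g v)" using mu by (simp add: field_simps)
qed



lemma no_eig_between:
  fixes g :: "'v::{real_inner,complete_space} \<Rightarrow> 'h::real_inner"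
  assumes lin: "bounded_linear g"
    and closest: "\<And>lam. is_eigenvalue g lam \<Longrightarrow>
                     \<bar>(lam1 - lam_s) / lam1\<bar> \<le> \<bar>(lam - lam_s) / lam\<bar>"
    and l0: "lam1 > 0" and lt: "lam1 < lam_s"
    and x: "x \<noteq> 0" and eq: "Kop g x = \<mu> *\<^sub>R x"
    and lo: "lam1 / lam_s\<^sup>2 < \<mu>" and hi: "\<mu> < 1 / lam1"
  shows False
proof -
  have t0: "lam_s > 0" using l0 lt by linarith
  have mu0: "\<mu> > 0" using lo l0 t0 by (smt (verit) divide_pos_pos zero_less_power)
  have "is_eigenvalue g (1 / \<mu>)" by (rule K_eig[OF lin x eq mu0])
  then have cl: "\<bar>(lam1 - lam_s) / lam1\<bar> \<le> \<bar>(1 / \<mu> - lam_s) / (1 / \<mu>)\<bar>" by (rule closest)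
  define a where "a = lam_s / lam1"
  define b where "b = lam_s * \<mu>"
  have a1: "a > 1" unfolding a_def using l0 lt by simp
  have L: "\<bar>(lam1 - lam_s) / lam1\<bar> = a - 1" unfolding a_def using l0 lt by (simp add: field_simps)
  have "(1 / \<mu> - lam_s) / (1 / \<mu>) = 1 - b" unfolding b_def using mu0 by (simp add: field_simps)
  then have R: "\<bar>(1 / \<mu> - lam_s) / (1 / \<mu>)\<bar> = \<bar>1 - b\<bar>" by simp
  have ba: "b < a" unfolding a_def b_def using hi t0 l0 by (simp add: field_simps)
  have ab: "a * b > 1"
  proof -
    have "lam1 < \<mu> * lam_s\<^sup>2" using lo t0 by (simp add: field_simps)
    then show ?thesis unfolding a_def b_def using l0 by (simp add: field_simps power2_eq_square)
  qed
  have "\<bar>1 - b\<bar> < a - 1"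
  proof (cases "b \<ge> 1")
    case True then show ?thesis using ba by simp
  next
    case False
    have "a * (a + b - 2) = a * a + a * b - 2 * a" by (simp add: algebra_simps)
    also have "\<dots> > a * a + 1 - 2 * a" using ab by simp
    also have "a * a + 1 - 2 * a = (a - 1)\<^sup>2" by (simp add: power2_eq_square algebra_simps)
    finally have "a * (a + b - 2) > 0" by (smt (verit) zero_le_power2)
    then have "a + b - 2 > 0" using a1 by (simp add: zero_less_mult_iff)
    then show ?thesis using False by simp
  qed
  then show False using cl L R by simp
qed

lemma Q_ineq:
  fixes g :: "'v::{real_inner,complete_space} \<Rightarrow> 'h::{real_inner,complete_space}"
  assumes lin: "bounded_linear g" and cpt: "compact_operator g"
    and closest: "\<And>lam. is_eigenvalue g lam \<Longrightarrow>
                     \<bar>(lam1 - lam_s) / lam1\<bar> \<le> \<bar>(lam - lam_s) / lam\<bar>"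
    and l0: "lam1 > 0" and lt: "lam1 < lam_s"
  shows "(norm (Kop g u))\<^sup>2 - (1 / lam1 + lam1 / lam_s\<^sup>2) * inner (Kop g u) u + (1 / lam_s\<^sup>2) * (norm u)\<^sup>2 \<ge> 0"
proof (rule ccontr)
  define K where "K = Kop g"
  define s where "s = 1 / lam1 + lam1 / lam_s\<^sup>2"
  define p where "p = 1 / lam_s\<^sup>2"
  have t0: "lam_s > 0" using l0 lt by linarith
  have p0: "p > 0" unfolding p_def using t0 by simp
  assume "\<not> ?thesis"
  then have fail: "(norm (K u))\<^sup>2 - s * inner (K u) u + p * (norm u)\<^sup>2 < 0"
    unfolding K_def s_def p_def by simp
  have Kbl: "bounded_linear K" unfolding K_def by (rule K_bl[OF lin])
  interpret K: bounded_linear K by fact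
  have Ksym: "inner (K x) y = inner x (K y)" for x y unfolding K_def by (rule K_sym[OF lin])
  define M where "M x = s *\<^sub>R K x - K (K x)" for x
  have Mbl: "bounded_linear M" unfolding M_def
    by (intro bounded_linear_sub bounded_linear_compose[OF bounded_linear_scaleR_right Kbl]
        bounded_linear_compose[OF Kbl Kbl])
  have Msym: "inner (M x) y = inner x (M y)" for x y
  proof -
    have "inner (K (K x)) y = inner (K x) (K y)" using Ksym[of "K x" y] .
    moreover have "inner x (K (K y)) = inner (K x) (K y)" using Ksym[of x "K y"] by simp
    ultimately show ?thesis unfolding M_def using Ksym[of x y]
      by (simp add: inner_diff_left inner_diff_right)
  qed
  have Mcpt: "\<exists>r. strict_mono r \<and> convergent (\<lambda>n. M (xs (r n)))" if bd: "bounded (range xs)" for xs :: "nat \<Rightarrow> 'v"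
  proof -
    obtain k where k: "k > 0" "\<And>x. norm (K x) \<le> norm x * k" using K.pos_bounded by blast
    obtain b where b: "\<And>n. norm (xs n) \<le> b" using bd unfolding bounded_iff by auto
    define ys where "ys n = s *\<^sub>R xs n - K (xs n)" for n
    have "norm (ys n) \<le> \<bar>s\<bar> * b + b * k" for n
    proof -
      have "norm (ys n) \<le> norm (s *\<^sub>R xs n) + norm (K (xs n))" unfolding ys_def by (rule norm_triangle_ineq4)
      also have "\<dots> \<le> \<bar>s\<bar> * b + b * k"
      proof (rule add_mono)
        show "norm (s *\<^sub>R xs n) \<le> \<bar>s\<bar> * b" using b[of n] by (simp add: mult_left_mono)
        show "norm (K (xs n)) \<le> b * k" using k(2)[of "xs n"] b[of n] k(1)
          by (meson mult_right_mono less_imp_le order_trans)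
      qed
      finally show ?thesis .
    qed
    then have "bounded (range ys)" unfolding bounded_iff by auto
    then obtain r where r: "strict_mono r" and cv: "convergent (\<lambda>n. K (ys (r n)))"
      unfolding K_def using K_cpt[OF lin cpt] by blast
    have "M (xs (r n)) = K (ys (r n))" for n unfolding M_def ys_def by (simp add: K.diff K.scale)
    then show ?thesis using r cv by auto
  qed
  have "inner (M u) u > p * (norm u)\<^sup>2"
  proof -
    have "inner (M u) u = s * inner (K u) u - (norm (K u))\<^sup>2"
      unfolding M_def using Ksym[of "K u" u] by (simp add: inner_diff_left power2_norm_eq_inner)
    then show ?thesis using fail by simp
  qed
  from top_eig[OF Mbl Msym Mcpt this] p0
  obtain \<sigma> x where sp: "\<sigma> > p" and xnz: "x \<noteq> 0" and Mx: "M x = \<sigma> *\<^sub>R x" by auto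
  have KKx: "K (K x) = s *\<^sub>R K x - \<sigma> *\<^sub>R x" using Mx unfolding M_def by (simp add: algebra_simps)
  have between: "\<mu>\<^sup>2 - s * \<mu> + \<sigma> = 0 \<Longrightarrow> lam1 / lam_s\<^sup>2 < \<mu> \<and> \<mu> < 1 / lam1" for \<mu>
  proof -
    assume h: "\<mu>\<^sup>2 - s * \<mu> + \<sigma> = 0"
    have "(\<mu> - 1 / lam1) * (\<mu> - lam1 / lam_s\<^sup>2) = \<mu>\<^sup>2 - s * \<mu> + p"
      unfolding s_def p_def using l0 t0 by (simp add: field_simps power2_eq_square)
    also have "\<dots> < 0" using h sp by linarith
    finally have neg: "(\<mu> - 1 / lam1) * (\<mu> - lam1 / lam_s\<^sup>2) < 0" .
    have "lam1 / lam_s\<^sup>2 < 1 / lam1"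
    proof -
      have "lam1 * lam1 < lam_s\<^sup>2" using l0 lt by (simp add: power2_eq_square mult_strict_mono)
      then show ?thesis using l0 t0 by (simp add: field_simps)
    qed
    then show ?thesis using neg by (auto simp: mult_less_0_iff)
  qed
  have eigK: "\<exists>y \<mu>. y \<noteq> 0 \<and> K y = \<mu> *\<^sub>R y \<and> \<mu>\<^sup>2 - s * \<mu> + \<sigma> = 0"
  proof (cases "s\<^sup>2 \<ge> 4 * \<sigma>")
    case False
    define a where "a = norm (K x)"
    define n where "n = norm x"
    have n0: "n > 0" unfolding n_def using xnz by simp
    have "inner (K (K x)) x = s * inner (K x) x - \<sigma> * n\<^sup>2"
      unfolding KKx n_def by (simp add: inner_diff_left power2_norm_eq_inner)
    moreover have "inner (K (K x)) x = a\<^sup>2" unfolding a_def using Ksym[of "K x" x]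
      by (simp add: power2_norm_eq_inner inner_commute)
    ultimately have eq0: "a\<^sup>2 - s * inner (K x) x + \<sigma> * n\<^sup>2 = 0" by simp
    have "s * inner (K x) x \<le> \<bar>s\<bar> * (a * n)"
    proof -
      have "s * inner (K x) x \<le> \<bar>s * inner (K x) x\<bar>" by simp
      also have "\<dots> = \<bar>s\<bar> * \<bar>inner (K x) x\<bar>" by (simp add: abs_mult)
      also have "\<dots> \<le> \<bar>s\<bar> * (a * n)" unfolding a_def n_def
        by (intro mult_left_mono Cauchy_Schwarz_ineq2) simp
      finally show ?thesis .
    qed
    then have "0 \<ge> a\<^sup>2 - \<bar>s\<bar> * a * n + \<sigma> * n\<^sup>2" using eq0 by (simp add: algebra_simps)
    moreover have "a\<^sup>2 - \<bar>s\<bar> * a * n + \<sigma> * n\<^sup>2 = (a - \<bar>s\<bar> * n / 2)\<^sup>2 + (\<sigma> - s\<^sup>2 / 4) * n\<^sup>2"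
      by (simp add: power2_eq_square algebra_simps)
    moreover have "(\<sigma> - s\<^sup>2 / 4) * n\<^sup>2 > 0" using False n0 by simp
    ultimately show ?thesis by (smt (verit) zero_le_power2)
  next
    case True
    define d where "d = sqrt (s\<^sup>2 - 4 * \<sigma>)"
    have d2: "d\<^sup>2 = s\<^sup>2 - 4 * \<sigma>" unfolding d_def using True by simp
    define ma where "ma = (s - d) / 2"
    define mb where "mb = (s + d) / 2"
    have sum: "ma + mb = s" unfolding ma_def mb_def by (simp add: field_simps)
    have prod: "ma * mb = \<sigma>" unfolding ma_def mb_def using d2 by (simp add: field_simps power2_eq_square)
    have ra: "ma\<^sup>2 - s * ma + \<sigma> = 0" unfolding sum[symmetric] prod[symmetric] by (simp add: power2_eq_square algebra_simps)
    have rb: "mb\<^sup>2 - s * mb + \<sigma> = 0" unfolding sum[symmetric] prod[symmetric] by (simp add: power2_eq_square algebra_simps)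
    define y where "y = K x - mb *\<^sub>R x"
    have "K y - ma *\<^sub>R y = K (K x) - (ma + mb) *\<^sub>R K x + (ma * mb) *\<^sub>R x"
      unfolding y_def by (simp add: K.diff K.scale algebra_simps scaleR_add_left)
    also have "\<dots> = 0" unfolding KKx sum prod by simp
    finally have Ky: "K y = ma *\<^sub>R y" by simp
    show ?thesis
    proof (cases "y = 0")
      case True
      then have "K x = mb *\<^sub>R x" unfolding y_def by simp
      then show ?thesis using xnz rb by blast
    next
      case False
      then show ?thesis using Ky ra by blast
    qed
  qed
  then obtain y \<mu> where "y \<noteq> 0" "K y = \<mu> *\<^sub>R y" "\<mu>\<^sup>2 - s * \<mu> + \<sigma> = 0" by blast
  with between no_eig_between[OF lin closest l0 lt] show False unfolding K_def by blast
qed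



theorem theorem3p4:
  fixes g :: "'v::{real_inner, complete_space} \<Rightarrow> 'h::{real_inner, complete_space}"
    and lam1 lam_s A B :: real
    and u_s w :: 'v
  assumes lin: "bounded_linear g"
    and cpt: "compact_operator g"
    and eig1: "is_eigenvalue g lam1"
    and lam1_min: "\<And>lam. is_eigenvalue g lam \<Longrightarrow> lam1 \<le> lam"
    and w_def: "\<And>v. inner w v = inner u_s v - lam_s * inner (g u_s) (g v)"
    and closest: "\<And>lam. is_eigenvalue g lam \<Longrightarrow>
                     \<bar>(lam1 - lam_s) / lam1\<bar> \<le> \<bar>(lam - lam_s) / lam\<bar>"
    and A_nonneg: "A \<ge> 0" and B_nonneg: "B \<ge> 0"
    and B_less: "B < lam_s * norm (g u_s)"
    and w_bound: "norm w \<le> A + onorm g * B"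
  shows "(let \<alpha> = A / norm (g u_s); \<beta> = B / norm (g u_s);
              X2 = (- \<alpha> + sqrt (\<alpha>\<^sup>2 + 4 * (lam_s - \<beta>))) / 2
          in X2\<^sup>2 \<le> lam1 \<and> onorm g \<le> 1 / X2)"
proof -
  define K where "K = Kop g"
  have l0: "lam1 > 0" by (rule eig_pos[OF eig1])
  have Kbl: "bounded_linear K" unfolding K_def by (rule K_bl[OF lin])
  have Ksym: "inner (K x) y = inner x (K y)" for x y unfolding K_def by (rule K_sym[OF lin])
  have Kin: "inner (K x) v = inner (g x) (g v)" for x v unfolding K_def by (rule K_inner[OF lin])
  have Kcpt: "\<exists>r. strict_mono r \<and> convergent (\<lambda>n. K (xs (r n)))" if "bounded (range xs)" for xs :: "nat \<Rightarrow> 'v"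
    unfolding K_def using K_cpt[OF lin cpt that] .
  have Cb: "(norm (g x))\<^sup>2 \<le> (norm x)\<^sup>2 / lam1" for x
  proof (rule ccontr)
    assume "\<not> ?thesis"
    then have "inner (K x) x > (1 / lam1) * (norm x)\<^sup>2"
      by (simp add: Kin power2_norm_eq_inner)
    from top_eig[OF Kbl Ksym Kcpt this] l0
    obtain \<sigma> y where sp: "\<sigma> > 1 / lam1" and y: "y \<noteq> 0" and Ky: "K y = \<sigma> *\<^sub>R y" by auto
    have s0: "\<sigma> > 0" using sp l0 by (smt (verit) divide_pos_pos)
    have "is_eigenvalue g (1 / \<sigma>)" using K_eig[OF lin y _ s0] Ky unfolding K_def by blast
    then have "lam1 \<le> 1 / \<sigma>" by (rule lam1_min)
    moreover have "1 / \<sigma> < lam1" using sp l0 s0 by (simp add: field_simps)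
    ultimately show False by simp
  qed
  define x1 where "x1 = sqrt lam1"
  have x1: "x1 > 0" "x1\<^sup>2 = lam1" unfolding x1_def using l0 by simp_all
  have gb: "norm (g x) \<le> (1 / x1) * norm x" for x
  proof -
    have "norm (g x) \<le> sqrt ((norm x)\<^sup>2 / lam1)" by (rule real_le_rsqrt[OF Cb])
    also have "\<dots> = (1 / x1) * norm x" unfolding x1_def by (simp add: real_sqrt_divide)
    finally show ?thesis .
  qed
  have onb: "onorm g \<le> 1 / x1" by (rule onorm_bound[OF _ gb]) (use x1 in simp)
  define N where "N = norm (g u_s)"
  have tN: "lam_s * N > 0" using B_less B_nonneg unfolding N_def by linarith
  have N0: "N > 0" and t0: "lam_s > 0"
  proof -
    have "N \<ge> 0" unfolding N_def by simp
    then show "N > 0" "lam_s > 0" using tN by (auto simp: zero_less_mult_iff)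
  qed
  define \<alpha> where "\<alpha> = A / N"
  define \<beta> where "\<beta> = B / N"
  define cc where "cc = lam_s - \<beta>"
  have a0: "\<alpha> \<ge> 0" unfolding \<alpha>_def using A_nonneg N0 by simp
  have b0: "\<beta> \<ge> 0" unfolding \<beta>_def using B_nonneg N0 by simp
  have cc0: "cc > 0" unfolding cc_def \<beta>_def using B_less N0 unfolding N_def by (simp add: field_simps)
  define S where "S = sqrt (\<alpha>\<^sup>2 + 4 * cc)"
  define X2 where "X2 = (- \<alpha> + S) / 2"
  have S2: "S\<^sup>2 = \<alpha>\<^sup>2 + 4 * cc" unfolding S_def using cc0 a0 by simp
  have Sa: "S > \<alpha>"
  proof -
    have "sqrt (\<alpha>\<^sup>2) < S" unfolding S_def using cc0 by (intro real_sqrt_less_mono) simp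
    then show ?thesis using a0 by simp
  qed
  have X2pos: "X2 > 0" unfolding X2_def using Sa by simp
  have X2eq: "X2\<^sup>2 + \<alpha> * X2 = cc" unfolding X2_def using S2
    by (simp add: power2_eq_square field_simps)
  have key: "x1\<^sup>2 + \<alpha> * x1 \<ge> cc"
  proof (cases "lam_s \<le> lam1")
    case True
    have "\<alpha> * x1 \<ge> 0" using x1 a0 by simp
    then show ?thesis using True x1 b0 unfolding cc_def by linarith
  next
    case False
    then have lt: "lam1 < lam_s" by simp
    have wK: "w = u_s - lam_s *\<^sub>R K u_s"
      by (rule inner_unique) (simp add: w_def inner_diff_left Kin)
    have Ku: "inner (K u_s) u_s = N\<^sup>2" unfolding N_def by (simp add: Kin power2_norm_eq_inner)
    have Q: "(norm (K u_s))\<^sup>2 - (1 / lam1 + lam1 / lam_s\<^sup>2) * inner (K u_s) u_s + (1 / lam_s\<^sup>2) * (norm u_s)\<^sup>2 \<ge> 0"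
      unfolding K_def by (rule Q_ineq[OF lin cpt closest l0 lt])
    have "(norm w)\<^sup>2 = (norm u_s)\<^sup>2 - 2 * lam_s * N\<^sup>2 + lam_s\<^sup>2 * (norm (K u_s))\<^sup>2"
    proof -
      have "w = u_s + (- lam_s) *\<^sub>R K u_s" unfolding wK by simp
      then have "(norm w)\<^sup>2 = (norm u_s)\<^sup>2 + 2 * (- lam_s) * inner u_s (K u_s) + (- lam_s)\<^sup>2 * (norm (K u_s))\<^sup>2"
        using norm_add_scale_sq by metis
      moreover have "inner u_s (K u_s) = N\<^sup>2" using Ku Ksym[of u_s u_s] by simp
      ultimately show ?thesis by simp
    qed
    also have "\<dots> \<ge> N\<^sup>2 * (lam_s - lam1)\<^sup>2 / lam1"
    proof -
      have "lam_s\<^sup>2 * (norm (K u_s))\<^sup>2 \<ge> lam_s\<^sup>2 * ((1 / lam1 + lam1 / lam_s\<^sup>2) * N\<^sup>2 - (1 / lam_s\<^sup>2) * (norm u_s)\<^sup>2)"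
        using Q Ku by (intro mult_left_mono) simp_all
      also have "lam_s\<^sup>2 * ((1 / lam1 + lam1 / lam_s\<^sup>2) * N\<^sup>2 - (1 / lam_s\<^sup>2) * (norm u_s)\<^sup>2)
          = (lam_s\<^sup>2 / lam1 + lam1) * N\<^sup>2 - (norm u_s)\<^sup>2" using t0 by (simp add: field_simps)
      finally have h: "lam_s\<^sup>2 * (norm (K u_s))\<^sup>2 \<ge> (lam_s\<^sup>2 / lam1 + lam1) * N\<^sup>2 - (norm u_s)\<^sup>2" .
      have "N\<^sup>2 * (lam_s - lam1)\<^sup>2 / lam1 = (lam_s\<^sup>2 / lam1 + lam1) * N\<^sup>2 - 2 * lam_s * N\<^sup>2"
        using l0 by (simp add: field_simps power2_eq_square)
      then show ?thesis using h by linarith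
    qed
    finally have w2: "(norm w)\<^sup>2 \<ge> N\<^sup>2 * (lam_s - lam1)\<^sup>2 / lam1" .
    have "sqrt (N\<^sup>2 * (lam_s - lam1)\<^sup>2 / lam1) = sqrt (N\<^sup>2) * sqrt ((lam_s - lam1)\<^sup>2) / sqrt lam1"
      by (simp add: real_sqrt_divide real_sqrt_mult)
    also have "\<dots> = N * (lam_s - lam1) / x1" unfolding x1_def using N0 lt by simp
    finally have eqs: "N * (lam_s - x1\<^sup>2) / x1 = sqrt (N\<^sup>2 * (lam_s - lam1)\<^sup>2 / lam1)" using x1 by simp
    have "sqrt (N\<^sup>2 * (lam_s - lam1)\<^sup>2 / lam1) \<le> sqrt ((norm w)\<^sup>2)" by (rule real_sqrt_le_mono[OF w2])
    then have "N * (lam_s - x1\<^sup>2) / x1 \<le> norm w" using eqs by simp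
    also have "norm w \<le> A + onorm g * B" by (rule w_bound)
    also have "\<dots> \<le> A + (1 / x1) * B" using mult_right_mono[OF onb B_nonneg] by simp
    finally have "N * (lam_s - x1\<^sup>2) / x1 \<le> A + B / x1" by simp
    moreover have "A + B / x1 = (A * x1 + B) / x1" using x1 by (simp add: field_simps)
    ultimately have "N * (lam_s - x1\<^sup>2) / x1 \<le> (A * x1 + B) / x1" by simp
    then have "N * (lam_s - x1\<^sup>2) \<le> A * x1 + B" using x1 by (simp add: divide_le_cancel)
    then have "lam_s - x1\<^sup>2 \<le> \<alpha> * x1 + \<beta>" unfolding \<alpha>_def \<beta>_def using N0 by (simp add: field_simps)
    then show ?thesis unfolding cc_def by simp
  qed
  have X2x1: "X2 \<le> x1"
  proof (rule ccontr)
    assume "\<not> X2 \<le> x1"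
    then have "x1 < X2" by simp
    then have "x1\<^sup>2 < X2\<^sup>2" "\<alpha> * x1 \<le> \<alpha> * X2" using x1 a0
      by (auto intro: power_strict_mono mult_left_mono)
    then show False using key X2eq by linarith
  qed
  have c1: "X2\<^sup>2 \<le> lam1" using power_mono[OF X2x1, of 2] X2pos x1 by simp
  have "1 / x1 \<le> 1 / X2" using X2x1 X2pos by (simp add: frac_le)
  then have c2: "onorm g \<le> 1 / X2" using onb by linarith
  show ?thesis unfolding Let_def using c1 c2 unfolding X2_def S_def cc_def \<alpha>_def \<beta>_def N_def by simp
qed

end
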